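(* Let $\Omega\subset\mathbb R^n$ be a nonempty open bounded set, $\eta:=\frac{2}{n+1}\cdot\frac{\mathscr H^{n-1}(\mathcal B^{n-1}_1)}{\mathscr H^n(\mathcal B^n_1)}$, and $0<\delta\le1$. Define $\Psi(\mathbf x):=\{\mathbf y\in\mathcal B_\delta(\mathbf x):(\mathbf y-\mathbf x)\cdot\mathbf e_1>0\}$ for $\mathbf x\in\Omega$ and $\Gamma:=\overline{\bigcup_{\mathbf x\in\Omega}\Psi(\mathbf x)}\setminus\Omega$. If $u\in L^1(\Omega\cup\Gamma)$ and $u=0$ a.e. on $\Gamma$, then $$\|u\|^2_{L^2(\Omega)}\le\frac{4(1+\operatorname{diam}\Omega)^3}{\eta^2}\int_\Omega\Big|\frac{1}{|\Psi(\mathbf x)|}\int_{\Psi(\mathbf x)}\frac{u(\mathbf y)-u(\mathbf x)}{\delta}\,d\mathbf y\Big|^2d\mathbf x.$$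
   Context: $\mathcal B_\delta(\mathbf x)$ is the open ball of radius $\delta$ about $\mathbf x$; $\mathcal B^k_1$ is the unit ball of $\mathbb R^k$; $\mathscr H^s$ is Hausdorff measure; $\mathbf e_1$ the first coordinate vector. *)

theory Defs
  imports "HOL-Analysis.Analysis"
begin

text \<open>First coordinate vector of real^'n; the index type is well-ordered so that
  "first" coordinate is its least element.\<close>
definition e1 :: "real ^ ('n::{finite,wellorder})" where
  "e1 = axis (LEAST i::'n. True) 1"

text \<open>eta = 2/(n+1) * H^{n-1}(B^{n-1}_1) / H^n(B^n_1); the library's unit_ball_vol k is
  the volume (= k-dim Hausdorff measure) of the unit ball of R^k.\<close>
definition eta_const :: "nat \<Rightarrow> real" where
  "eta_const n = 2 / (real n + 1) * unit_ball_vol (real n - 1) / unit_ball_vol (real n)"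

definition Psi :: "real \<Rightarrow> real ^ ('n::{finite,wellorder}) \<Rightarrow> (real ^ ('n::{finite,wellorder})) set" where
  "Psi \<delta> x = {y \<in> ball x \<delta>. (y - x) \<bullet> e1 > 0}"

definition Gamma :: "real \<Rightarrow> (real ^ ('n::{finite,wellorder})) set \<Rightarrow> (real ^ ('n::{finite,wellorder})) set" where
  "Gamma \<delta> \<Omega> = closure (\<Union>x\<in>\<Omega>. Psi \<delta> x) - \<Omega>"

end

theory Submission
  imports Defs
begin


definition i0 :: "'n::{finite,wellorder}" where "i0 = (LEAST i::'n. True)"

lemma e1_eq: "(e1::real^'n::{finite,wellorder}) = axis i0 1"
  by (simp add: e1_def i0_def)

lemma e1_Basis: "(e1::real^'n::{finite,wellorder}) \<in> Basis"
  by (simp add: e1_eq)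

lemma norm_e1: "norm (e1::real^'n::{finite,wellorder}) = 1"
  by (simp add: e1_eq)

lemma inner_e1: "(z::real^'n::{finite,wellorder}) \<bullet> e1 = z $ i0"
  by (simp add: e1_eq inner_axis)

lemma abs_inner_e1_le: "\<bar>(z::real^'n::{finite,wellorder}) \<bullet> e1\<bar> \<le> norm z"
  using Cauchy_Schwarz_ineq2[of z e1] by (simp add: norm_e1)

lemma Psi_shift: "indicator (Psi \<delta> x) y = (indicator (Psi \<delta> 0) (y - x) :: real)"
  by (simp add: Psi_def indicator_def dist_norm norm_minus_commute)

lemma Psi_shift': "indicator (Psi \<delta> x) y = (indicator (Psi \<delta> 0) (y - x) :: ennreal)"
  by (simp add: Psi_def indicator_def dist_norm norm_minus_commute)

lemma open_Psi: "open (Psi \<delta> x)"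
proof -
  have "Psi \<delta> x = ball x \<delta> \<inter> {y. (y - x) \<bullet> e1 > 0}" by (auto simp: Psi_def)
  moreover have "open {y. (y - x) \<bullet> e1 > 0}"
    by (intro open_Collect_less continuous_intros)
  ultimately show ?thesis by auto
qed

lemma Psi_borel[measurable]: "Psi \<delta> x \<in> sets borel"
  using open_Psi by (rule borel_open)



lemma oneD_integral:
  fixes r :: real and k :: nat
  assumes r: "r > 0"
  shows "((\<lambda>y. y * sqrt (r^2 - y^2) ^ k) has_integral r^(k+2) / (k+2)) {0..r}"
proof -
  define F where "F y = - (sqrt (r^2 - y^2) ^ (k+2)) / (k+2)" for y
  have cont: "continuous_on {0..r} F" unfolding F_def by (intro continuous_intros) auto
  have der: "(F has_vector_derivative (y * sqrt (r^2 - y^2) ^ k)) (at y)" if y: "y \<in> {0<..<r}" for y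
  proof -
    have pos: "r^2 - y^2 > 0" using y by (simp add: power_strict_mono)
    define s where "s = sqrt (r^2 - y^2)"
    have s: "s > 0" "s * s = r^2 - y^2" using pos by (auto simp: s_def)
    have "(F has_real_derivative (y * s ^ k)) (at y)"
      unfolding F_def using pos
      apply (auto intro!: derivative_eq_intros simp: s_def[symmetric])
      using s apply (cases k)
       apply (auto simp: field_simps)
      subgoal for m
        apply (subgoal_tac "s * real m + s * 3 > 0")
         apply (simp add: field_simps power2_eq_square)
        by (simp add: add_nonneg_pos)
      done
    then show ?thesis by (simp add: has_real_derivative_iff_has_vector_derivative s_def)
  qed
  have "((\<lambda>y. y * sqrt (r^2 - y^2) ^ k) has_integral (F r - F 0)) {0..r}"
    by (rule fundamental_theorem_of_calculus_interior[OF _ cont der]) (use r in auto)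
  moreover have "F r - F 0 = r^(k+2) / (k+2)"
    using r by (simp add: F_def power_mult[symmetric])
  ultimately show ?thesis by simp
qed



lemma half_moment:
  fixes e :: "'a::euclidean_space" and r :: real
  assumes e: "e \<in> Basis" and r: "r > 0"
  shows "(\<integral>\<^sup>+ z. indicator (cball 0 r) z * ennreal (z \<bullet> e) \<partial>lborel)
     = ennreal (unit_ball_vol (real (DIM('a) - 1)) * r^(DIM('a)+1) / (DIM('a)+1))"
proof -
  define A where "A = Basis - {e}"
  define k where "k = DIM('a) - 1"
  have A: "finite A" "e \<notin> A" "insert e A = Basis" using e by (auto simp: A_def)
  have cardA: "card A = k" using e by (simp add: A_def k_def card_Diff_singleton)
  have Dk: "DIM('a) = k + 1" using DIM_positive[where 'a='a] by (simp add: k_def)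
  interpret product_sigma_finite "\<lambda>_. lborel" by standard
  let ?M = "\<lambda>I. Pi\<^sub>M I (\<lambda>_::'a. (lborel::real measure))"
  have inner_sum: "(\<Sum>b\<in>Basis. f b *\<^sub>R b) \<bullet> e = f e" for f :: "'a \<Rightarrow> real"
    using e by (simp add: inner_sum_left inner_Basis if_distrib cong: if_cong)
  have dist_sum: "norm (\<Sum>b\<in>Basis. f b *\<^sub>R b) \<le> r \<longleftrightarrow> sqrt (\<Sum>i\<in>Basis. (f i)\<^sup>2) \<le> r"
    for f :: "'a \<Rightarrow> real"
  proof -
    have "dist 0 (\<Sum>b\<in>Basis. f b *\<^sub>R b) = sqrt (\<Sum>i\<in>Basis. (f i)\<^sup>2)"
      by (subst euclidean_dist_l2) (auto simp: L2_set_def inner_sum_left inner_Basis if_distrib dist_real_def cong: if_cong)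
    then show ?thesis by (simp add: dist_norm)
  qed
  have "(\<integral>\<^sup>+ z. indicator (cball 0 r) z * ennreal (z \<bullet> e) \<partial>lborel)
      = (\<integral>\<^sup>+ f. indicator (cball 0 r) (\<Sum>b\<in>Basis. f b *\<^sub>R b) * ennreal ((\<Sum>b\<in>Basis. f b *\<^sub>R b) \<bullet> e) \<partial>?M Basis)"
  proof -
    have [measurable]: "cball (0::'a) r \<in> sets borel" by (simp add: borel_closed)
    have m1: "(\<lambda>z::'a. indicator (cball 0 r) z * ennreal (z \<bullet> e)) \<in> borel_measurable borel" by measurable
    show ?thesis
      apply (subst lborel_eq)
      apply (subst nn_integral_distr)
        apply measurable[1]
      using m1 apply (simp cong: measurable_cong_sets)
      apply simp
      done
  qed
  also have "\<dots> = (\<integral>\<^sup>+ f. indicator ({f. sqrt (\<Sum>i\<in>Basis. (f i)\<^sup>2) \<le> r} \<inter> space (?M Basis)) f * ennreal (f e) \<partial>?M Basis)"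
    by (intro nn_integral_cong) (simp add: inner_sum dist_sum indicator_def)
  also have "\<dots> = (\<integral>\<^sup>+ f. indicator ({f. sqrt (\<Sum>i\<in>insert e A. (f i)\<^sup>2) \<le> r} \<inter> space (?M (insert e A))) f * ennreal (f e) \<partial>?M (insert e A))"
    using A by simp
  also have "\<dots> = (\<integral>\<^sup>+ y. \<integral>\<^sup>+ x. indicator ({f. sqrt (\<Sum>i\<in>insert e A. (f i)\<^sup>2) \<le> r} \<inter> space (?M (insert e A))) (x(e := y)) * ennreal y \<partial>?M A \<partial>lborel)"
  proof (subst product_nn_integral_insert_rev)
    have [measurable]: "(\<lambda>f. f e) \<in> ?M (insert e A) \<rightarrow>\<^sub>M lborel"
      by (rule measurable_component_singleton) simp
    have [measurable]: "(\<lambda>f. f i) \<in> ?M (insert e A) \<rightarrow>\<^sub>M lborel" if "i \<in> insert e A" for i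
      using that by (rule measurable_component_singleton)
    have [measurable]: "{f. sqrt (\<Sum>i\<in>insert e A. (f i)\<^sup>2) \<le> r} \<inter> space (?M (insert e A)) \<in> sets (?M (insert e A))"
      by measurable
    show "(\<lambda>f. indicator ({f. sqrt (\<Sum>i\<in>insert e A. (f i)\<^sup>2) \<le> r} \<inter> space (?M (insert e A))) f * ennreal (f e)) \<in> borel_measurable (?M (insert e A))"
      by measurable
  qed (use A in auto)
  also have "\<dots> = (\<integral>\<^sup>+ y. \<integral>\<^sup>+ x. ennreal y * indicator {-r..r} y * indicator ({f. sqrt (\<Sum>i\<in>A. (f i)\<^sup>2) \<le>
               sqrt (r ^ 2 - y ^ 2)} \<inter> space (?M A)) x \<partial>?M A \<partial>lborel)"
  proof (intro nn_integral_cong, goal_cases)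
    case (1 y f)
    have *: "y \<in> {-r..r}" if "y ^ 2 + c \<le> r ^ 2" "c \<ge> 0" for c
    proof -
      have "y ^ 2 \<le> y ^ 2 + c" using that by simp
      also have "\<dots> \<le> r ^ 2" by fact
      finally show ?thesis
        using \<open>r > 0\<close> by (simp add: power2_le_iff_abs_le abs_if split: if_splits)
    qed
    have **: "y \<in> {-r..r}" if "c \<le> r ^ 2 - y ^ 2" "c \<ge> 0" for c
      using *[of c] that by simp
    have "(\<Sum>x\<in>A. (if x = e then y else f x)\<^sup>2) = (\<Sum>x\<in>A. (f x)\<^sup>2)"
      using A(2) by (intro sum.cong) auto
    thus ?case using 1 \<open>r > 0\<close> A(1,2)
      by (auto simp: sum_nonneg real_sqrt_le_iff' indicator_def PiE_def space_PiM dest!: * **)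
  qed
  also have "\<dots> = (\<integral>\<^sup>+ y. ennreal y * indicator {-r..r} y * emeasure (?M A)
      ({f. sqrt (\<Sum>i\<in>A. (f i)\<^sup>2) \<le> sqrt (r ^ 2 - y ^ 2)} \<inter> space (?M A)) \<partial>lborel)"
    using A by (intro nn_integral_cong) (simp add: nn_integral_cmult)
  also have "\<dots> = (\<integral>\<^sup>+ y. ennreal (unit_ball_vol (real k) * (y * sqrt (r ^ 2 - y ^ 2) ^ k)) * indicator {0..r} y \<partial>lborel)"
  proof (intro nn_integral_cong_AE)
    have "AE y in lborel. y \<notin> {-r,r}"
      by (intro AE_not_in countable_imp_null_set_lborel) auto
    thus "AE y in lborel. ennreal y * indicator {-r..r} y * emeasure (?M A)
      ({f. sqrt (\<Sum>i\<in>A. (f i)\<^sup>2) \<le> sqrt (r ^ 2 - y ^ 2)} \<inter> space (?M A)) =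
      ennreal (unit_ball_vol (real k) * (y * sqrt (r ^ 2 - y ^ 2) ^ k)) * indicator {0..r} y"
    proof eventually_elim
      case (elim y)
      show ?case
      proof (cases "y \<in> {0<..<r}")
        case True
        hence "y\<^sup>2 < r\<^sup>2" by (simp add: power_strict_mono)
        hence "emeasure (?M A) ({f. sqrt (\<Sum>i\<in>A. (f i)\<^sup>2) \<le> sqrt (r ^ 2 - y ^ 2)} \<inter> space (?M A))
           = ennreal (unit_ball_vol (real k) * sqrt (r ^ 2 - y ^ 2) ^ k)"
          using A cardA by (subst emeasure_cball_aux) auto
        then show ?thesis using True
          by (simp add: ennreal_mult'[symmetric] mult_ac indicator_def)
      next
        case False
        then have "y \<le> 0 \<or> y \<ge> r" by auto
        then show ?thesis using elim
          by (auto simp: indicator_def ennreal_neg mult_nonpos_nonneg)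
      qed
    qed
  qed
  also have "\<dots> = ennreal (unit_ball_vol (real k) * (r^(k+2) / (k+2)))"
  proof (rule nn_integral_has_integral_lebesgue')
    show "((\<lambda>y. unit_ball_vol (real k) * (y * sqrt (r ^ 2 - y ^ 2) ^ k)) has_integral
       unit_ball_vol (real k) * (r^(k+2) / (k+2))) {0..r}"
      by (rule has_integral_mult_right[OF oneD_integral[OF r]])
  qed auto
  finally show ?thesis by (simp add: Dk)
qed



lemma nn_integral_shift:
  fixes f :: "'a::euclidean_space \<Rightarrow> ennreal" and x :: 'a
  assumes [measurable]: "f \<in> borel_measurable borel"
  shows "(\<integral>\<^sup>+ y. f (y - x) \<partial>lborel) = (\<integral>\<^sup>+ y. f y \<partial>lborel)"
proof -
  have "(\<integral>\<^sup>+ y. f y \<partial>lborel) = (\<integral>\<^sup>+ y. f y \<partial>distr lborel borel ((+) (-x)))"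
    by (simp add: lborel_distr_plus)
  also have "\<dots> = (\<integral>\<^sup>+ y. f (- x + y) \<partial>lborel)"
    by (subst nn_integral_distr) auto
  finally show ?thesis by simp
qed

lemma nn_integral_reflect:
  fixes f :: "'a::euclidean_space \<Rightarrow> ennreal" and x :: 'a
  assumes [measurable]: "f \<in> borel_measurable borel"
  shows "(\<integral>\<^sup>+ y. f (x - y) \<partial>lborel) = (\<integral>\<^sup>+ y. f y \<partial>lborel)"
proof -
  have "(lborel::'a measure) = density (distr lborel borel (\<lambda>y. x + (-1) *\<^sub>R y)) (\<lambda>_. \<bar>-1::real\<bar>^DIM('a))"
    by (rule lborel_affine) simp
  then have eq: "(lborel::'a measure) = distr lborel borel (\<lambda>y. x - y)"
    by (simp add: density_1)
  have "(\<integral>\<^sup>+ y. f y \<partial>lborel) = (\<integral>\<^sup>+ y. f y \<partial>distr lborel borel (\<lambda>y. x - y))"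
    by (subst eq[symmetric]) simp
  also have "\<dots> = (\<integral>\<^sup>+ y. f (x - y) \<partial>lborel)"
    by (subst nn_integral_distr) auto
  finally show ?thesis by simp
qed

lemma meas_test:
  fixes v :: "real^'n::{finite,wellorder} \<Rightarrow> real"
  assumes [measurable]: "v \<in> borel_measurable borel"
  shows "(\<lambda>x. \<integral> y. indicator (Psi \<delta> 0) (y - x) * v y \<partial>lborel) \<in> borel_measurable lborel"
    "(\<lambda>x. \<integral>\<^sup>+ y. indicator (Psi \<delta> 0) (y - x) * ennreal (v y) \<partial>lborel) \<in> borel_measurable lborel"
  by measurable



lemma Psi_0: "Psi \<delta> (0::real^'n::{finite,wellorder}) = {z. norm z < \<delta> \<and> z \<bullet> e1 > 0}"
  by (auto simp: Psi_def)

lemma Psi_moment: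
  assumes d: "\<delta> > 0"
  shows "(\<integral>\<^sup>+ z. indicator (Psi \<delta> (0::real^'n::{finite,wellorder})) z * ennreal (z \<bullet> e1) \<partial>lborel)
     = ennreal (unit_ball_vol (real CARD('n) - 1) * \<delta>^(CARD('n)+1) / (CARD('n)+1))"
proof -
  have null: "sphere (0::real^'n::{finite,wellorder}) \<delta> \<in> null_sets lborel"
    using negligible_sphere[of "0::real^'n::{finite,wellorder}" \<delta>]
    by (auto simp: null_sets_completion_iff negligible_iff_null_sets negligible_convex_frontier)
  have "(\<integral>\<^sup>+ z. indicator (Psi \<delta> (0::real^'n::{finite,wellorder})) z * ennreal (z \<bullet> e1) \<partial>lborel)
      = (\<integral>\<^sup>+ z. indicator (cball (0::real^'n::{finite,wellorder}) \<delta>) z * ennreal (z \<bullet> e1) \<partial>lborel)"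
  proof (intro nn_integral_cong_AE)
    show "AE z in lborel. indicator (Psi \<delta> (0::real^'n::{finite,wellorder})) z * ennreal (z \<bullet> e1) = indicator (cball (0::real^'n::{finite,wellorder}) \<delta>) z * ennreal (z \<bullet> e1)"
      using AE_not_in[OF null]
      by eventually_elim (auto simp: Psi_0 indicator_def ennreal_neg)
  qed
  also have "\<dots> = ennreal (unit_ball_vol (real (DIM(real^'n::{finite,wellorder}) - 1)) * \<delta>^(DIM(real^'n::{finite,wellorder})+1) / (DIM(real^'n::{finite,wellorder})+1))"
    by (rule half_moment[OF e1_Basis d])
  also have "real (DIM(real^'n::{finite,wellorder}) - 1) = real CARD('n) - 1"
    using DIM_positive[where 'a="real^'n::{finite,wellorder}"] by (simp add: of_nat_diff)
  finally show ?thesis by simp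
qed

lemma Psi_measure_upper:
  assumes d: "\<delta> > 0"
  shows "2 * emeasure lborel (Psi \<delta> (0::real^'n::{finite,wellorder})) \<le> ennreal (unit_ball_vol CARD('n) * \<delta>^CARD('n))"
proof -
  let ?H = "Psi \<delta> (0::real^'n::{finite,wellorder})"
  let ?H' = "{z::real^'n::{finite,wellorder}. norm z < \<delta> \<and> z \<bullet> e1 < 0}"
  have "(lborel::(real^'n::{finite,wellorder}) measure) = density (distr lborel borel (\<lambda>y. 0 + (-1) *\<^sub>R y)) (\<lambda>_. \<bar>-1::real\<bar>^DIM(real^'n::{finite,wellorder}))"
    by (rule lborel_affine) simp
  then have eq: "(lborel::(real^'n::{finite,wellorder}) measure) = distr lborel borel uminus"
    by (simp add: density_1)
  have "emeasure lborel ?H = emeasure (distr lborel borel uminus) ?H"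
    by (subst eq[symmetric]) simp
  also have "\<dots> = emeasure lborel (uminus -` ?H)"
    by (subst emeasure_distr) auto
  also have "uminus -` ?H = ?H'" by (auto simp: Psi_0)
  finally have e: "emeasure lborel ?H = emeasure lborel ?H'" .
  have [measurable]: "?H' \<in> sets borel"
  proof -
    have "open ?H'" by (intro open_Collect_conj open_Collect_less continuous_intros)
    then show ?thesis by (rule borel_open)
  qed
  have "2 * emeasure lborel ?H = emeasure lborel ?H + emeasure lborel ?H'"
    using e by (simp add: mult_2)
  also have "\<dots> = emeasure lborel (?H \<union> ?H')"
    by (rule plus_emeasure) (auto simp: Psi_0)
  also have "\<dots> \<le> emeasure lborel (ball (0::real^'n::{finite,wellorder}) \<delta>)"
    by (rule emeasure_mono) (auto simp: Psi_0)
  also have "\<dots> = ennreal (unit_ball_vol CARD('n) * \<delta>^CARD('n))"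
    using d by (simp add: emeasure_ball)
  finally show ?thesis .
qed

lemma Psi_measure_pos:
  assumes d: "\<delta> > 0"
  shows "0 < emeasure lborel (Psi \<delta> (0::real^'n::{finite,wellorder}))"
proof -
  have sub: "ball ((\<delta>/2) *\<^sub>R e1) (\<delta>/2) \<subseteq> Psi \<delta> (0::real^'n::{finite,wellorder})"
  proof
    fix z :: "real^'n::{finite,wellorder}" assume z: "z \<in> ball ((\<delta>/2) *\<^sub>R e1) (\<delta>/2)"
    then have nz: "norm (z - (\<delta>/2) *\<^sub>R e1) < \<delta>/2" by (simp add: dist_norm norm_minus_commute)
    have "norm z \<le> norm ((\<delta>/2) *\<^sub>R (e1::real^'n::{finite,wellorder})) + norm (z - (\<delta>/2) *\<^sub>R e1)"
      by (rule norm_triangle_sub)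
    moreover have "norm ((\<delta>/2) *\<^sub>R (e1::real^'n::{finite,wellorder})) = \<delta>/2"
      using d by (simp add: norm_e1)
    ultimately have n1: "norm z < \<delta>" using nz by linarith
    have ab: "\<bar>(z - (\<delta>/2) *\<^sub>R e1) \<bullet> e1\<bar> < \<delta>/2"
      using abs_inner_e1_le[of "z - (\<delta>/2) *\<^sub>R e1"] nz by (rule le_less_trans)
    have "(e1::real^'n::{finite,wellorder}) \<bullet> e1 = 1" by (simp add: e1_eq inner_axis_axis)
    then have "(z - (\<delta>/2) *\<^sub>R e1) \<bullet> e1 = z \<bullet> e1 - \<delta>/2" by (simp add: inner_diff_left)
    with ab have "z \<bullet> e1 > 0" by linarith
    with n1 show "z \<in> Psi \<delta> 0" by (simp add: Psi_0)
  qed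
  have "0 < emeasure lborel (ball ((\<delta>/2) *\<^sub>R (e1::real^'n::{finite,wellorder})) (\<delta>/2))"
    using d by (simp add: emeasure_ball)
  also have "\<dots> \<le> emeasure lborel (Psi \<delta> (0::real^'n::{finite,wellorder}))"
    by (rule emeasure_mono[OF sub]) simp
  finally show ?thesis .
qed

lemma Psi_measure_shift:
  "emeasure lborel (Psi \<delta> (x::real^'n::{finite,wellorder})) = emeasure lborel (Psi \<delta> (0::real^'n::{finite,wellorder}))"
proof -
  have "emeasure lborel (Psi \<delta> x) = (\<integral>\<^sup>+ y. indicator (Psi \<delta> x) y \<partial>lborel)" by simp
  also have "\<dots> = (\<integral>\<^sup>+ y. indicator (Psi \<delta> 0) (y - x) \<partial>lborel)" by (intro nn_integral_cong) (rule Psi_shift')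
  also have "\<dots> = (\<integral>\<^sup>+ y. indicator (Psi \<delta> (0::real^'n::{finite,wellorder})) y \<partial>lborel)" using nn_integral_shift[where f="indicator (Psi \<delta> 0)" and x=x] by simp
  finally show ?thesis by simp
qed



lemma core_pointwise:
  fixes v :: "real^'n::{finite,wellorder} \<Rightarrow> real"
  assumes vi: "integrable lborel v" and v2i: "integrable lborel (\<lambda>y. (v y)\<^sup>2)"
    and em: "emeasure lborel (Psi \<delta> x) = ennreal s" and s: "s > 0"
  shows "(v x)\<^sup>2 \<le> (1/s) * (\<integral> y. indicator (Psi \<delta> x) y * (v y)\<^sup>2 \<partial>lborel)
     + 2 * \<bar>v x\<bar> * \<bar>v x - (1/s) * (\<integral> y. indicator (Psi \<delta> x) y * v y \<partial>lborel)\<bar>"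
proof -
  let ?P = "Psi \<delta> x"
  have P[measurable]: "?P \<in> sets lborel" by simp
  define I0 where "I0 = (\<integral> y. indicator ?P y \<partial>lborel :: real)"
  define I1 where "I1 = (\<integral> y. indicator ?P y * v y \<partial>lborel)"
  define I2 where "I2 = (\<integral> y. indicator ?P y * (v y)\<^sup>2 \<partial>lborel)"
  have I0: "I0 = s" using em s by (simp add: I0_def measure_def)
  have i0: "integrable lborel (\<lambda>y. indicator ?P y :: real)"
    using em by (intro integrable_real_indicator) auto
  have i1: "integrable lborel (\<lambda>y. indicator ?P y * v y)"
    using integrable_real_mult_indicator[OF P vi] by (simp add: mult_ac)
  have i2: "integrable lborel (\<lambda>y. indicator ?P y * (v y)\<^sup>2)"
    using integrable_real_mult_indicator[OF P v2i] by (simp add: mult_ac)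
  have eq: "(\<lambda>y. indicator ?P y * (v y - v x)\<^sup>2) =
     (\<lambda>y. indicator ?P y * (v y)\<^sup>2 - 2 * v x * (indicator ?P y * v y) + (v x)\<^sup>2 * indicator ?P y)"
    by (rule ext) (simp add: power2_eq_square algebra_simps)
  have "0 \<le> (\<integral> y. indicator ?P y * (v y - v x)\<^sup>2 \<partial>lborel)"
    by (rule integral_nonneg_AE) auto
  also have "\<dots> = I2 - 2 * v x * I1 + (v x)\<^sup>2 * I0"
    unfolding eq I0_def I1_def I2_def
    using i0 i1 i2 by (simp add: integral_diff integral_add)
  finally have "0 \<le> I2 - 2 * v x * I1 + (v x)\<^sup>2 * s" by (simp add: I0)
  then have "0 \<le> I2 / s - 2 * v x * (I1 / s) + (v x)\<^sup>2"
    using s by (simp add: field_simps)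
  then have "(v x)\<^sup>2 \<le> I2 / s + 2 * v x * (v x - I1 / s)"
    by (simp add: power2_eq_square algebra_simps)
  also have "2 * v x * (v x - I1 / s) \<le> 2 * \<bar>v x\<bar> * \<bar>v x - I1 / s\<bar>"
    by (metis abs_ge_self abs_mult mult.assoc abs_numeral)
  finally show ?thesis by (simp add: I1_def I2_def)
qed



lemma inner_lt_delta: "z \<in> Psi \<delta> (0::real^'n::{finite,wellorder}) \<Longrightarrow> 0 < z \<bullet> e1 \<and> z \<bullet> e1 < \<delta>"
  using abs_inner_e1_le[of z] by (auto simp: Psi_0)

lemma kernel_bound:
  fixes y :: "real^'n::{finite,wellorder}"
  assumes d: "\<delta> > 0" and em: "emeasure lborel (Psi \<delta> (0::real^'n::{finite,wellorder})) = ennreal s" and s: "s > 0"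
    and Q: "(\<integral>\<^sup>+ z. indicator (Psi \<delta> (0::real^'n::{finite,wellorder})) z * ennreal (z \<bullet> e1) \<partial>lborel) = ennreal Q"
    and b: "0 \<le> b" "b \<le> Q" and a: "c + \<delta> \<le> y \<bullet> e1"
  shows "ennreal (1/s) * (\<integral>\<^sup>+ x. ennreal (x \<bullet> e1 - c) * indicator (Psi \<delta> (0::real^'n::{finite,wellorder})) (y - x) \<partial>lborel)
     \<le> ennreal (y \<bullet> e1 - c - b/s)"
proof -
  let ?H = "Psi \<delta> (0::real^'n::{finite,wellorder})"
  define K where "K = (\<integral>\<^sup>+ x. ennreal (x \<bullet> e1 - c) * indicator ?H (y - x) \<partial>lborel)"
  have K: "K = (\<integral>\<^sup>+ w. ennreal ((y - w) \<bullet> e1 - c) * indicator ?H w \<partial>lborel)"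
  proof -
    define f where "f w = ennreal ((y - w) \<bullet> e1 - c) * indicator ?H w" for w :: "real^'n::{finite,wellorder}"
    have fm: "f \<in> borel_measurable borel" unfolding f_def by measurable
    have "(\<lambda>x. ennreal (x \<bullet> e1 - c) * indicator ?H (y - x)) = (\<lambda>x. f (y - x))"
      by (rule ext) (simp add: f_def)
    then have "K = (\<integral>\<^sup>+ x. f (y - x) \<partial>lborel)" by (simp add: K_def)
    also have "\<dots> = (\<integral>\<^sup>+ x. f x \<partial>lborel)" by (rule nn_integral_reflect[OF fm])
    finally show ?thesis by (simp add: f_def)
  qed
  have "K + ennreal Q = (\<integral>\<^sup>+ w. ennreal ((y - w) \<bullet> e1 - c) * indicator ?H w + indicator ?H w * ennreal (w \<bullet> e1) \<partial>lborel)"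
    unfolding K Q[symmetric] by (rule nn_integral_add[symmetric]) auto
  also have "\<dots> = (\<integral>\<^sup>+ w. ennreal (y \<bullet> e1 - c) * indicator ?H w \<partial>lborel)"
  proof (intro nn_integral_cong)
    fix w :: "real^'n::{finite,wellorder}"
    show "ennreal ((y - w) \<bullet> e1 - c) * indicator ?H w + indicator ?H w * ennreal (w \<bullet> e1) =
          ennreal (y \<bullet> e1 - c) * indicator ?H w"
    proof (cases "w \<in> ?H")
      case True
      then have "0 < w \<bullet> e1" "w \<bullet> e1 < \<delta>" using inner_lt_delta by auto
      then have "ennreal ((y - w) \<bullet> e1 - c) + ennreal (w \<bullet> e1) = ennreal (y \<bullet> e1 - c)"
        using a by (subst ennreal_plus[symmetric]) (auto simp: inner_diff_left)
      then show ?thesis using True by simp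
    qed simp
  qed
  also have "\<dots> = ennreal (y \<bullet> e1 - c) * ennreal s"
    using em by (subst nn_integral_cmult) auto
  also have "\<dots> = ennreal ((y \<bullet> e1 - c) * s)"
    using a d by (simp add: ennreal_mult')
  finally have eq: "K + ennreal Q = ennreal ((y \<bullet> e1 - c) * s)" .
  have Q0: "Q \<ge> 0" using b by simp
  have "K \<le> ennreal ((y \<bullet> e1 - c) * s)"
    by (subst eq[symmetric]) (rule add_increasing2, auto)
  then have "K < \<infinity>" by (rule le_less_trans) simp
  then have "K \<noteq> \<infinity>" by simp
  then obtain k where k: "K = ennreal k" "k \<ge> 0" by (cases K) auto
  have "ennreal (k + Q) = ennreal ((y \<bullet> e1 - c) * s)" using eq k Q0 by simp
  moreover have "0 \<le> (y \<bullet> e1 - c) * s" using a d s by simp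
  ultimately have "k + Q = (y \<bullet> e1 - c) * s"
    using k Q0 by (metis add_nonneg_nonneg ennreal_inj)
  then have "k / s \<le> y \<bullet> e1 - c - b/s"
    using b s by (simp add: field_simps)
  then have "ennreal (1/s) * K \<le> ennreal (y \<bullet> e1 - c - b/s)"
    using k s by (simp add: ennreal_mult'[symmetric] ennreal_leI)
  then show ?thesis by (simp add: K_def)
qed



lemma mem_Psi_shift: "y \<in> Psi \<delta> x \<longleftrightarrow> y - x \<in> Psi \<delta> (0::real^'n::{finite,wellorder})"
  by (simp add: Psi_def dist_norm norm_minus_commute)

lemma core_tonelli:
  fixes v :: "real^'n::{finite,wellorder} \<Rightarrow> real"
  assumes vb[measurable]: "v \<in> borel_measurable borel" and v0: "\<And>x. x \<notin> \<Omega> \<Longrightarrow> v x = 0"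
    and v2i: "integrable lborel (\<lambda>y. (v y)\<^sup>2)"
    and d: "\<delta> > 0" and em0: "emeasure lborel (Psi \<delta> (0::real^'n::{finite,wellorder})) = ennreal s" and s: "s > 0"
    and Q: "(\<integral>\<^sup>+ z. indicator (Psi \<delta> (0::real^'n::{finite,wellorder})) z * ennreal (z \<bullet> e1) \<partial>lborel) = ennreal Q"
    and b: "0 \<le> b" "b \<le> Q" and c: "\<And>y. y \<in> \<Omega> \<Longrightarrow> c + \<delta> \<le> y \<bullet> e1"
  shows "(\<integral>\<^sup>+ x. ennreal (x \<bullet> e1 - c) * ennreal ((1/s) * (\<integral> y. indicator (Psi \<delta> x) y * (v y)\<^sup>2 \<partial>lborel)) \<partial>lborel)
     \<le> (\<integral>\<^sup>+ y. ennreal ((v y)\<^sup>2) * ennreal (y \<bullet> e1 - c - b/s) \<partial>lborel)"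
proof -
  let ?H = "Psi \<delta> (0::real^'n::{finite,wellorder})"
  have em: "emeasure lborel (Psi \<delta> x) = ennreal s" for x :: "real^'n::{finite,wellorder}"
    using em0 Psi_measure_shift by metis
  have stepa: "ennreal ((1/s) * (\<integral> y. indicator (Psi \<delta> x) y * (v y)\<^sup>2 \<partial>lborel))
      = ennreal (1/s) * (\<integral>\<^sup>+ y. indicator ?H (y - x) * ennreal ((v y)\<^sup>2) \<partial>lborel)"
    for x :: "real^'n::{finite,wellorder}"
  proof -
    have P[measurable]: "Psi \<delta> x \<in> sets lborel" by simp
    have i2: "integrable lborel (\<lambda>y. indicator (Psi \<delta> x) y * (v y)\<^sup>2)"
      using integrable_real_mult_indicator[OF P v2i] by (simp add: mult_ac)
    have "(\<integral>\<^sup>+ y. ennreal (indicator (Psi \<delta> x) y * (v y)\<^sup>2) \<partial>lborel) = ennreal (\<integral> y. indicator (Psi \<delta> x) y * (v y)\<^sup>2 \<partial>lborel)"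
      by (rule nn_integral_eq_integral[OF i2]) auto
    moreover have "(\<integral>\<^sup>+ y. ennreal (indicator (Psi \<delta> x) y * (v y)\<^sup>2) \<partial>lborel)
        = (\<integral>\<^sup>+ y. indicator ?H (y - x) * ennreal ((v y)\<^sup>2) \<partial>lborel)"
      by (intro nn_integral_cong) (simp add: indicator_def mem_Psi_shift[of _ \<delta> x])
    moreover have "ennreal ((1/s) * (\<integral> y. indicator (Psi \<delta> x) y * (v y)\<^sup>2 \<partial>lborel))
       = ennreal (1/s) * ennreal (\<integral> y. indicator (Psi \<delta> x) y * (v y)\<^sup>2 \<partial>lborel)"
      using s by (intro ennreal_mult') simp
    ultimately show ?thesis by metis
  qed
  define F where "F x y = ennreal (x \<bullet> e1 - c) * (indicator ?H (y - x) * ennreal ((v y)\<^sup>2))"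
    for x y :: "real^'n::{finite,wellorder}"
  have Fm: "case_prod F \<in> borel_measurable (lborel \<Otimes>\<^sub>M lborel)"
    unfolding F_def by measurable
  have "(\<integral>\<^sup>+ x. ennreal (x \<bullet> e1 - c) * ennreal ((1/s) * (\<integral> y. indicator (Psi \<delta> x) y * (v y)\<^sup>2 \<partial>lborel)) \<partial>lborel)
      = (\<integral>\<^sup>+ x. ennreal (1/s) * (\<integral>\<^sup>+ y. F x y \<partial>lborel) \<partial>lborel)"
    unfolding stepa F_def
    by (intro nn_integral_cong) (simp add: nn_integral_cmult mult_ac)
  also have "\<dots> = ennreal (1/s) * (\<integral>\<^sup>+ x. (\<integral>\<^sup>+ y. F x y \<partial>lborel) \<partial>lborel)"
    by (rule nn_integral_cmult) (use Fm in measurable)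
  also have "(\<integral>\<^sup>+ x. (\<integral>\<^sup>+ y. F x y \<partial>lborel) \<partial>lborel) = (\<integral>\<^sup>+ y. (\<integral>\<^sup>+ x. F x y \<partial>lborel) \<partial>lborel)"
    by (rule lborel_pair.Fubini'[OF Fm, symmetric])
  also have "\<dots> = (\<integral>\<^sup>+ y. ennreal ((v y)\<^sup>2) * (\<integral>\<^sup>+ x. ennreal (x \<bullet> e1 - c) * indicator ?H (y - x) \<partial>lborel) \<partial>lborel)"
    unfolding F_def
    by (intro nn_integral_cong) (simp add: nn_integral_cmult[symmetric] mult_ac)
  also have "ennreal (1/s) * \<dots> = (\<integral>\<^sup>+ y. ennreal ((v y)\<^sup>2) * (ennreal (1/s) * (\<integral>\<^sup>+ x. ennreal (x \<bullet> e1 - c) * indicator ?H (y - x) \<partial>lborel)) \<partial>lborel)"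
    by (subst nn_integral_cmult[symmetric]) (auto simp: mult_ac)
  also have "\<dots> \<le> (\<integral>\<^sup>+ y. ennreal ((v y)\<^sup>2) * ennreal (y \<bullet> e1 - c - b/s) \<partial>lborel)"
  proof (intro nn_integral_mono)
    fix y :: "real^'n::{finite,wellorder}"
    show "ennreal ((v y)\<^sup>2) * (ennreal (1/s) * (\<integral>\<^sup>+ x. ennreal (x \<bullet> e1 - c) * indicator ?H (y - x) \<partial>lborel))
        \<le> ennreal ((v y)\<^sup>2) * ennreal (y \<bullet> e1 - c - b/s)"
    proof (cases "y \<in> \<Omega>")
      case True
      show ?thesis
        by (rule mult_left_mono[OF kernel_bound[OF d em0 s Q b c[OF True]]]) simp
    qed (simp add: v0)
  qed
  finally show ?thesis .
qed



lemma Psi_avg_eq: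
  fixes v :: "real^'n::{finite,wellorder} \<Rightarrow> real"
  shows "(\<lambda>x. (1/s) * (\<integral> y. indicator (Psi \<delta> x) y * f (v y) \<partial>lborel))
       = (\<lambda>x. (1/s) * (\<integral> y. indicator (Psi \<delta> (0::real^'n::{finite,wellorder})) (y - x) * f (v y) \<partial>lborel))"
proof (rule ext)
  fix x :: "real^'n::{finite,wellorder}"
  have "(\<integral> y. indicator (Psi \<delta> x) y * f (v y) \<partial>lborel) = (\<integral> y. indicator (Psi \<delta> (0::real^'n::{finite,wellorder})) (y - x) * f (v y) \<partial>lborel)"
    by (intro Bochner_Integration.integral_cong refl) (simp add: indicator_def mem_Psi_shift[of _ \<delta> x])
  then show "(1/s) * (\<integral> y. indicator (Psi \<delta> x) y * f (v y) \<partial>lborel)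
       = (1/s) * (\<integral> y. indicator (Psi \<delta> (0::real^'n::{finite,wellorder})) (y - x) * f (v y) \<partial>lborel)" by simp
qed

lemma Psi_avg_meas1:
  fixes v :: "real^'n::{finite,wellorder} \<Rightarrow> real"
  assumes [measurable]: "v \<in> borel_measurable borel"
  shows "(\<lambda>x. (1/s) * (\<integral> y. indicator (Psi \<delta> x) y * v y \<partial>lborel)) \<in> borel_measurable lborel"
proof -
  have "(\<lambda>x. \<integral> y. indicator (Psi \<delta> (0::real^'n::{finite,wellorder})) (y - x) * v y \<partial>lborel) \<in> borel_measurable lborel"
    by measurable
  then show ?thesis using Psi_avg_eq[of s \<delta> "\<lambda>t. t" v] by simp
qed

lemma Psi_avg_meas2:
  fixes v :: "real^'n::{finite,wellorder} \<Rightarrow> real"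
  assumes [measurable]: "v \<in> borel_measurable borel"
  shows "(\<lambda>x. (1/s) * (\<integral> y. indicator (Psi \<delta> x) y * (v y)\<^sup>2 \<partial>lborel)) \<in> borel_measurable lborel"
proof -
  have "(\<lambda>x. \<integral> y. indicator (Psi \<delta> (0::real^'n::{finite,wellorder})) (y - x) * (v y)\<^sup>2 \<partial>lborel) \<in> borel_measurable lborel"
    by measurable
  then show ?thesis using Psi_avg_eq[of s \<delta> "\<lambda>t. t\<^sup>2" v] by simp
qed



lemma two_ab_le:
  fixes a g L \<eta> \<delta> :: real
  assumes "\<eta> > 0" "\<delta> > 0"
  shows "2 * L * \<delta> * \<bar>a\<bar> * \<bar>g\<bar> \<le> (\<eta>*\<delta>/2) * a\<^sup>2 + (2*L\<^sup>2*\<delta>/\<eta>) * g\<^sup>2"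
proof -
  have "0 \<le> (\<eta> * \<bar>a\<bar> - 2 * L * \<bar>g\<bar>)\<^sup>2" by simp
  then have "4 * L * \<eta> * \<bar>a\<bar> * \<bar>g\<bar> \<le> \<eta>\<^sup>2 * a\<^sup>2 + 4 * L\<^sup>2 * g\<^sup>2"
    by (simp add: power2_eq_square algebra_simps)
  then have "(\<delta> / (2*\<eta>)) * (4 * L * \<eta> * \<bar>a\<bar> * \<bar>g\<bar>) \<le> (\<delta> / (2*\<eta>)) * (\<eta>\<^sup>2 * a\<^sup>2 + 4 * L\<^sup>2 * g\<^sup>2)"
    using assms by (intro mult_left_mono) auto
  then show ?thesis using assms by (simp add: field_simps power2_eq_square)
qed

lemma core:
  fixes v :: "real^'n::{finite,wellorder} \<Rightarrow> real" and \<Omega> :: "(real^'n::{finite,wellorder}) set"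
  assumes vb[measurable]: "v \<in> borel_measurable borel" and v0: "\<And>x. x \<notin> \<Omega> \<Longrightarrow> v x = 0"
    and \<Omega>m[measurable]: "\<Omega> \<in> sets borel" and \<Omega>fin: "emeasure lborel \<Omega> < \<infinity>"
    and vi: "integrable lborel v" and d: "\<delta> > 0"
    and em0: "emeasure lborel (Psi \<delta> (0::real^'n::{finite,wellorder})) = ennreal s" and s: "s > 0"
    and Q: "(\<integral>\<^sup>+ z. indicator (Psi \<delta> (0::real^'n::{finite,wellorder})) z * ennreal (z \<bullet> e1) \<partial>lborel) = ennreal Q"
    and eta: "\<eta> > 0" "\<eta> * \<delta> * s \<le> Q" "Q \<le> \<delta> * s"
    and c: "\<And>y. y \<in> \<Omega> \<Longrightarrow> c + \<delta> \<le> y \<bullet> e1" "\<And>y. y \<in> \<Omega> \<Longrightarrow> y \<bullet> e1 - c \<le> L" and L: "L > 0"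
  shows "(\<integral>\<^sup>+ x. indicator \<Omega> x * ennreal ((v x)\<^sup>2) \<partial>lborel)
     \<le> ennreal (4 * L\<^sup>2 / \<eta>\<^sup>2) * (\<integral>\<^sup>+ x. indicator \<Omega> x *
          ennreal ((((1/s) * (\<integral> y. indicator (Psi \<delta> x) y * v y \<partial>lborel) - v x) / \<delta>)\<^sup>2) \<partial>lborel)"
proof -
  define Av where "Av x = (1/s) * (\<integral> y. indicator (Psi \<delta> x) y * v y \<partial>lborel)" for x
  define W where "W x = (1/s) * (\<integral> y. indicator (Psi \<delta> x) y * (v y)\<^sup>2 \<partial>lborel)" for x
  define g where "g x = (Av x - v x) / \<delta>" for x
  have Avm[measurable]: "Av \<in> borel_measurable lborel"
    unfolding Av_def[abs_def] by (rule Psi_avg_meas1) simp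
  have Wm[measurable]: "W \<in> borel_measurable lborel"
    unfolding W_def[abs_def] by (rule Psi_avg_meas2) simp
  have gm[measurable]: "g \<in> borel_measurable lborel" unfolding g_def[abs_def] by measurable
  have vm[measurable]: "v \<in> borel_measurable lborel" by simp
  define F where "F = (\<integral>\<^sup>+ x. indicator \<Omega> x * ennreal ((v x)\<^sup>2) \<partial>lborel)"
  define G2 where "G2 = (\<integral>\<^sup>+ x. indicator \<Omega> x * ennreal ((g x)\<^sup>2) \<partial>lborel)"
  have goal_eq: "?thesis \<longleftrightarrow> F \<le> ennreal (4 * L\<^sup>2 / \<eta>\<^sup>2) * G2"
    by (simp add: F_def G2_def g_def Av_def)
  have em: "emeasure lborel (Psi \<delta> x) = ennreal s" for x :: "real^'n::{finite,wellorder}"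
    using em0 Psi_measure_shift by metis
  have Kpos: "4 * L\<^sup>2 / \<eta>\<^sup>2 > 0" using L eta by simp
  show ?thesis
  proof (cases "G2 = \<infinity>")
    case True
    then have "ennreal (4 * L\<^sup>2 / \<eta>\<^sup>2) * G2 = \<infinity>"
      using Kpos L eta by (simp add: ennreal_mult_top)
    then show ?thesis unfolding goal_eq by simp
  next
    case False
    have eta1: "\<eta> \<le> 1" using eta d s by (metis mult_le_cancel_right2 mult.commute mult.assoc order_trans zero_less_mult_iff)
    define M where "M = (\<integral> y. \<bar>v y\<bar> \<partial>lborel) / s"
    have AvM: "\<bar>Av x\<bar> \<le> M" for x
    proof -
      have P[measurable]: "Psi \<delta> x \<in> sets lborel" by simp
      have i1: "integrable lborel (\<lambda>y. indicator (Psi \<delta> x) y * v y)"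
        using integrable_real_mult_indicator[OF P vi] by (simp add: mult_ac)
      have "\<bar>\<integral> y. indicator (Psi \<delta> x) y * v y \<partial>lborel\<bar> \<le> (\<integral> y. \<bar>v y\<bar> \<partial>lborel)"
        by (rule integral_abs_bound_integral[OF i1]) (use vi in \<open>auto simp: indicator_def\<close>)
      then show ?thesis using s by (simp add: Av_def M_def abs_mult divide_right_mono)
    qed
    have "F \<le> (\<integral>\<^sup>+ x. indicator \<Omega> x * ennreal (2 * M\<^sup>2) + ennreal (2 * \<delta>\<^sup>2) * (indicator \<Omega> x * ennreal ((g x)\<^sup>2)) \<partial>lborel)"
      unfolding F_def
    proof (intro nn_integral_mono)
      fix x
      have vx: "v x = Av x - \<delta> * g x" using d by (simp add: g_def)
      have e: "2 * (Av x)\<^sup>2 + 2 * (\<delta> * g x)\<^sup>2 - (Av x - \<delta> * g x)\<^sup>2 = (Av x + \<delta> * g x)\<^sup>2"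
        by (simp add: power2_eq_square algebra_simps)
      have "(v x)\<^sup>2 \<le> 2 * (Av x)\<^sup>2 + 2 * (\<delta> * g x)\<^sup>2"
        unfolding vx using e zero_le_power2[of "Av x + \<delta> * g x"] by linarith
      also have "(Av x)\<^sup>2 \<le> M\<^sup>2" using power_mono[OF AvM[of x] abs_ge_zero, of 2] by simp
      finally have "(v x)\<^sup>2 \<le> 2 * M\<^sup>2 + 2 * \<delta>\<^sup>2 * (g x)\<^sup>2" by (simp add: power_mult_distrib)
      then have "ennreal ((v x)\<^sup>2) \<le> ennreal (2 * M\<^sup>2) + ennreal (2 * \<delta>\<^sup>2) * ennreal ((g x)\<^sup>2)"
        by (simp add: ennreal_mult'[symmetric] ennreal_plus[symmetric] del: ennreal_plus)
      then show "indicator \<Omega> x * ennreal ((v x)\<^sup>2) \<le> indicator \<Omega> x * ennreal (2 * M\<^sup>2) + ennreal (2 * \<delta>\<^sup>2) * (indicator \<Omega> x * ennreal ((g x)\<^sup>2))"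
        by (cases "x \<in> \<Omega>") (auto simp: mult_ac)
    qed
    also have "\<dots> = ennreal (2 * M\<^sup>2) * emeasure lborel \<Omega> + ennreal (2 * \<delta>\<^sup>2) * G2"
      unfolding G2_def
      by (subst nn_integral_add) (auto simp: nn_integral_cmult mult.commute[of "indicator \<Omega> _"])
    also have "\<dots> < \<infinity>"
      using \<Omega>fin False by (simp add: ennreal_mult_less_top less_top)
    finally have Ffin: "F < \<infinity>" .
    have v2eq: "(\<integral>\<^sup>+ x. ennreal (norm ((v x)\<^sup>2)) \<partial>lborel) = F"
      unfolding F_def by (intro nn_integral_cong) (auto simp: indicator_def v0)
    have v2i: "integrable lborel (\<lambda>y. (v y)\<^sup>2)"
      by (rule integrableI_bounded) (use v2eq Ffin in auto)
    have P: "(v x)\<^sup>2 \<le> W x + 2 * \<bar>v x\<bar> * \<bar>v x - Av x\<bar>" for x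
      unfolding W_def Av_def by (rule core_pointwise[OF vi v2i em s])
    define T where "T = (\<integral>\<^sup>+ y. ennreal ((v y)\<^sup>2) * ennreal (y \<bullet> e1 - c - \<eta> * \<delta>) \<partial>lborel)"
    define R where "R = (\<integral>\<^sup>+ x. ennreal ((x \<bullet> e1 - c) * (2 * \<bar>v x\<bar> * \<bar>v x - Av x\<bar>)) \<partial>lborel)"
    have step1: "(\<integral>\<^sup>+ x. ennreal (x \<bullet> e1 - c) * ennreal ((v x)\<^sup>2) \<partial>lborel)
        \<le> (\<integral>\<^sup>+ x. ennreal (x \<bullet> e1 - c) * ennreal (W x) \<partial>lborel) + R"
    proof -
      have "(\<integral>\<^sup>+ x. ennreal (x \<bullet> e1 - c) * ennreal ((v x)\<^sup>2) \<partial>lborel)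
          \<le> (\<integral>\<^sup>+ x. ennreal (x \<bullet> e1 - c) * ennreal (W x) + ennreal ((x \<bullet> e1 - c) * (2 * \<bar>v x\<bar> * \<bar>v x - Av x\<bar>)) \<partial>lborel)"
      proof (intro nn_integral_mono)
        fix x :: "real^'n::{finite,wellorder}"
        have W0: "W x \<ge> 0"
          unfolding W_def using s by (intro mult_nonneg_nonneg integral_nonneg_AE) auto
        have "ennreal ((v x)\<^sup>2) \<le> ennreal (W x) + ennreal (2 * \<bar>v x\<bar> * \<bar>v x - Av x\<bar>)"
          using P[of x] W0 by (simp add: ennreal_plus[symmetric] del: ennreal_plus)
        then have "ennreal (x \<bullet> e1 - c) * ennreal ((v x)\<^sup>2) \<le> ennreal (x \<bullet> e1 - c) * (ennreal (W x) + ennreal (2 * \<bar>v x\<bar> * \<bar>v x - Av x\<bar>))"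
          by (rule mult_left_mono) simp
        also have "\<dots> = ennreal (x \<bullet> e1 - c) * ennreal (W x) + ennreal ((x \<bullet> e1 - c) * (2 * \<bar>v x\<bar> * \<bar>v x - Av x\<bar>))"
          by (simp add: distrib_left ennreal_mult'')
        finally show "ennreal (x \<bullet> e1 - c) * ennreal ((v x)\<^sup>2) \<le> ennreal (x \<bullet> e1 - c) * ennreal (W x) + ennreal ((x \<bullet> e1 - c) * (2 * \<bar>v x\<bar> * \<bar>v x - Av x\<bar>))" .
      qed
      also have "\<dots> = (\<integral>\<^sup>+ x. ennreal (x \<bullet> e1 - c) * ennreal (W x) \<partial>lborel) + R"
        unfolding R_def by (rule nn_integral_add) auto
      finally show ?thesis .
    qed
    have step2: "(\<integral>\<^sup>+ x. ennreal (x \<bullet> e1 - c) * ennreal (W x) \<partial>lborel) \<le> T"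
    proof -
      have b0: "0 \<le> \<eta> * \<delta> * s" using eta(1) d s by simp
      have "(\<integral>\<^sup>+ x. ennreal (x \<bullet> e1 - c) * ennreal (W x) \<partial>lborel)
         \<le> (\<integral>\<^sup>+ y. ennreal ((v y)\<^sup>2) * ennreal (y \<bullet> e1 - c - (\<eta> * \<delta> * s)/s) \<partial>lborel)"
        unfolding W_def
        by (rule core_tonelli[OF vb v0 v2i d em0 s Q b0 eta(2) c(1)])
      also have "(\<eta> * \<delta> * s)/s = \<eta> * \<delta>" using s by simp
      finally show ?thesis by (simp add: T_def)
    qed
    have step3: "(\<integral>\<^sup>+ x. ennreal (x \<bullet> e1 - c) * ennreal ((v x)\<^sup>2) \<partial>lborel) = T + ennreal (\<eta> * \<delta>) * F"
    proof -
      have "(\<integral>\<^sup>+ x. ennreal (x \<bullet> e1 - c) * ennreal ((v x)\<^sup>2) \<partial>lborel)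
          = (\<integral>\<^sup>+ x. ennreal ((v x)\<^sup>2) * ennreal (x \<bullet> e1 - c - \<eta> * \<delta>) + ennreal (\<eta> * \<delta>) * (indicator \<Omega> x * ennreal ((v x)\<^sup>2)) \<partial>lborel)"
      proof (intro nn_integral_cong)
        fix x :: "real^'n::{finite,wellorder}"
        show "ennreal (x \<bullet> e1 - c) * ennreal ((v x)\<^sup>2) =
           ennreal ((v x)\<^sup>2) * ennreal (x \<bullet> e1 - c - \<eta> * \<delta>) + ennreal (\<eta> * \<delta>) * (indicator \<Omega> x * ennreal ((v x)\<^sup>2))"
        proof (cases "x \<in> \<Omega>")
          case True
          have "\<eta> * \<delta> \<le> \<delta>" using eta1 d by simp
          then have ge: "\<eta> * \<delta> \<le> x \<bullet> e1 - c" using c(1)[OF True] by simp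
          have "ennreal (x \<bullet> e1 - c) = ennreal (x \<bullet> e1 - c - \<eta> * \<delta>) + ennreal (\<eta> * \<delta>)"
            using ge eta d by (subst ennreal_plus[symmetric]) auto
          then show ?thesis using True by (simp add: distrib_left mult.commute)
        qed (simp add: v0)
      qed
      also have "\<dots> = T + ennreal (\<eta> * \<delta>) * F"
        unfolding T_def F_def
        by (subst nn_integral_add) (auto simp: nn_integral_cmult)
      finally show ?thesis .
    qed
    have step4: "R \<le> ennreal (\<eta> * \<delta> / 2) * F + ennreal (2 * L\<^sup>2 * \<delta> / \<eta>) * G2"
    proof -
      have "R \<le> (\<integral>\<^sup>+ x. ennreal (\<eta> * \<delta> / 2) * (indicator \<Omega> x * ennreal ((v x)\<^sup>2)) + ennreal (2 * L\<^sup>2 * \<delta> / \<eta>) * (indicator \<Omega> x * ennreal ((g x)\<^sup>2)) \<partial>lborel)"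
        unfolding R_def
      proof (intro nn_integral_mono)
        fix x :: "real^'n::{finite,wellorder}"
        show "ennreal ((x \<bullet> e1 - c) * (2 * \<bar>v x\<bar> * \<bar>v x - Av x\<bar>))
          \<le> ennreal (\<eta> * \<delta> / 2) * (indicator \<Omega> x * ennreal ((v x)\<^sup>2)) + ennreal (2 * L\<^sup>2 * \<delta> / \<eta>) * (indicator \<Omega> x * ennreal ((g x)\<^sup>2))"
        proof (cases "x \<in> \<Omega>")
          case True
          have ph: "0 \<le> x \<bullet> e1 - c" "x \<bullet> e1 - c \<le> L" using c[OF True] d by auto
          have va: "\<bar>v x - Av x\<bar> = \<delta> * \<bar>g x\<bar>" using d by (simp add: g_def abs_minus_commute)
          have "(x \<bullet> e1 - c) * (2 * \<bar>v x\<bar> * \<bar>v x - Av x\<bar>) \<le> L * (2 * \<bar>v x\<bar> * \<bar>v x - Av x\<bar>)"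
            using ph by (intro mult_right_mono) auto
          also have "\<dots> = 2 * L * \<delta> * \<bar>v x\<bar> * \<bar>g x\<bar>" unfolding va by (simp add: mult_ac)
          also have "\<dots> \<le> (\<eta>*\<delta>/2) * (v x)\<^sup>2 + (2*L\<^sup>2*\<delta>/\<eta>) * (g x)\<^sup>2"
            by (rule two_ab_le[OF eta(1) d])
          finally have "ennreal ((x \<bullet> e1 - c) * (2 * \<bar>v x\<bar> * \<bar>v x - Av x\<bar>)) \<le> ennreal ((\<eta>*\<delta>/2) * (v x)\<^sup>2 + (2*L\<^sup>2*\<delta>/\<eta>) * (g x)\<^sup>2)"
            by (rule ennreal_leI)
          also have "\<dots> = ennreal ((\<eta>*\<delta>/2) * (v x)\<^sup>2) + ennreal ((2*L\<^sup>2*\<delta>/\<eta>) * (g x)\<^sup>2)"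
            by (rule ennreal_plus) (use eta d in auto)
          also have "ennreal ((\<eta>*\<delta>/2) * (v x)\<^sup>2) = ennreal (\<eta> * \<delta> / 2) * ennreal ((v x)\<^sup>2)"
            by (rule ennreal_mult') (use eta d in auto)
          also have "ennreal ((2*L\<^sup>2*\<delta>/\<eta>) * (g x)\<^sup>2) = ennreal (2 * L\<^sup>2 * \<delta> / \<eta>) * ennreal ((g x)\<^sup>2)"
            by (rule ennreal_mult') (use eta d in auto)
          finally show ?thesis using True by simp
        qed (simp add: v0)
      qed
      also have "\<dots> = ennreal (\<eta> * \<delta> / 2) * F + ennreal (2 * L\<^sup>2 * \<delta> / \<eta>) * G2"
        unfolding F_def G2_def
        by (subst nn_integral_add) (auto simp: nn_integral_cmult)
      finally show ?thesis .
    qed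
    have Tfin: "T < \<infinity>"
    proof -
      have "T \<le> (\<integral>\<^sup>+ x. ennreal L * (indicator \<Omega> x * ennreal ((v x)\<^sup>2)) \<partial>lborel)"
        unfolding T_def
      proof (intro nn_integral_mono)
        fix x :: "real^'n::{finite,wellorder}"
        show "ennreal ((v x)\<^sup>2) * ennreal (x \<bullet> e1 - c - \<eta> * \<delta>) \<le> ennreal L * (indicator \<Omega> x * ennreal ((v x)\<^sup>2))"
        proof (cases "x \<in> \<Omega>")
          case True
          have "x \<bullet> e1 - c - \<eta> * \<delta> \<le> L" using c(2)[OF True] eta d by (smt (verit) mult_pos_pos)
          then have "ennreal (x \<bullet> e1 - c - \<eta> * \<delta>) \<le> ennreal L" by (rule ennreal_leI)
          then have "ennreal ((v x)\<^sup>2) * ennreal (x \<bullet> e1 - c - \<eta> * \<delta>) \<le> ennreal ((v x)\<^sup>2) * ennreal L"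
            by (rule mult_left_mono) simp
          then show ?thesis using True by (simp add: mult.commute)
        qed (simp add: v0)
      qed
      also have "\<dots> = ennreal L * F" unfolding F_def by (rule nn_integral_cmult) simp
      also have "\<dots> < \<infinity>" using Ffin by (simp add: ennreal_mult_less_top)
      finally show ?thesis .
    qed
    have "T + ennreal (\<eta> * \<delta>) * F \<le> T + (ennreal (\<eta> * \<delta> / 2) * F + ennreal (2 * L\<^sup>2 * \<delta> / \<eta>) * G2)"
      using step1 step2 step3 step4
      by (metis (no_types, lifting) add_mono order_trans order_refl)
    then have main: "ennreal (\<eta> * \<delta>) * F \<le> ennreal (\<eta> * \<delta> / 2) * F + ennreal (2 * L\<^sup>2 * \<delta> / \<eta>) * G2"
      using Tfin by (auto simp: ennreal_add_left_cancel_le)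
    obtain f where f: "F = ennreal f" "f \<ge> 0" using Ffin by (cases F) auto
    obtain g2 where g2: "G2 = ennreal g2" "g2 \<ge> 0" using False by (cases G2) auto
    have "ennreal (\<eta> * \<delta> * f) \<le> ennreal (\<eta> * \<delta> / 2 * f + 2 * L\<^sup>2 * \<delta> / \<eta> * g2)"
      using main f g2 eta d
      by (simp add: ennreal_mult'[symmetric] ennreal_plus[symmetric] del: ennreal_plus)
    then have "\<eta> * \<delta> * f \<le> \<eta> * \<delta> / 2 * f + 2 * L\<^sup>2 * \<delta> / \<eta> * g2"
      using f g2 eta d by (subst (asm) ennreal_le_iff) auto
    then have "\<eta> * \<delta> / 2 * f \<le> 2 * L\<^sup>2 * \<delta> / \<eta> * g2" by simp
    then have "(2 / (\<eta> * \<delta>)) * (\<eta> * \<delta> / 2 * f) \<le> (2 / (\<eta> * \<delta>)) * (2 * L\<^sup>2 * \<delta> / \<eta> * g2)"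
      using eta d by (intro mult_left_mono) auto
    then have "f \<le> 4 * L\<^sup>2 / \<eta>\<^sup>2 * g2"
      using eta d by (simp add: field_simps power2_eq_square)
    then have "F \<le> ennreal (4 * L\<^sup>2 / \<eta>\<^sup>2) * G2"
      using f g2 Kpos by (simp add: ennreal_mult'[symmetric] ennreal_leI)
    then show ?thesis unfolding goal_eq .
  qed
qed



lemma aux_cancel:
  fixes a b d N :: real
  assumes "b \<noteq> 0"
  shows "a * d / (N * b) * (b * d ^ n) = a * d ^ (n + 1) / N"
  using assms by (simp add: field_simps)

theorem mainTheorem12:
  fixes \<Omega> :: "(real ^ ('n::{finite,wellorder})) set"
    and u :: "real ^ ('n::{finite,wellorder}) \<Rightarrow> real"
    and \<delta> :: real
  assumes "open \<Omega>" and "bounded \<Omega>" and "\<Omega> \<noteq> {}"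
    and "0 < \<delta>" and "\<delta> \<le> 1"
    and "set_integrable lebesgue (\<Omega> \<union> Gamma \<delta> \<Omega>) u"
    and "AE y in lebesgue. y \<in> Gamma \<delta> \<Omega> \<longrightarrow> u y = 0"
  shows "(\<integral>\<^sup>+ x\<in>\<Omega>. ennreal ((u x)\<^sup>2) \<partial>lebesgue)
    \<le> ennreal (4 * (1 + diameter \<Omega>) ^ 3 / (eta_const CARD('n))\<^sup>2) *
       (\<integral>\<^sup>+ x\<in>\<Omega>. ennreal ((\<bar>(1 / measure lebesgue (Psi \<delta> x)) *
            (\<integral>y\<in>Psi \<delta> x. (u y - u x) / \<delta> \<partial>lebesgue)\<bar>)\<^sup>2) \<partial>lebesgue)"
proof -
  note op = assms(1) and bd = assms(2) and ne = assms(3) and d = assms(4) and d1 = assms(5)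
    and ui = assms(6) and uG = assms(7)
  let ?G = "Gamma \<delta> \<Omega>"
  let ?H = "Psi \<delta> (0::real^'n::{finite,wellorder})"
  have \<Omega>m[measurable]: "\<Omega> \<in> sets borel" using op by (rule borel_open)
  have \<Omega>fin: "emeasure lborel \<Omega> < \<infinity>" using bd by (rule emeasure_bounded_finite)
  define w where "w x = indicator (\<Omega> \<union> ?G) x * u x" for x
  have wi: "integrable lebesgue w" using ui by (simp add: set_integrable_def w_def[abs_def])
  define f0 where "f0 x = indicator \<Omega> x * w x" for x
  have f0u: "f0 x = indicator \<Omega> x * u x" for x by (simp add: f0_def w_def indicator_def)
  have f0i: "integrable lebesgue f0"
    unfolding f0_def using integrable_real_mult_indicator[of \<Omega> lebesgue w] wi
    by (simp add: mult.commute)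
  have "f0 \<in> borel_measurable lebesgue" using f0i by (rule borel_measurable_integrable)
  from completion_ex_borel_measurable_real[OF this]
  obtain v0 where v0m: "v0 \<in> borel_measurable lborel" and v0ae: "AE x in lborel. f0 x = v0 x" by blast
  define v where "v x = indicator \<Omega> x * v0 x" for x
  have vb[measurable]: "v \<in> borel_measurable borel" using v0m unfolding v_def[abs_def] by simp
  have v0': "\<And>x. x \<notin> \<Omega> \<Longrightarrow> v x = 0" by (simp add: v_def)
  have fv_lborel: "AE x in lborel. f0 x = v x"
    using v0ae by eventually_elim (auto simp: v_def f0_def indicator_def)
  have fv: "AE x in lebesgue. f0 x = v x" using fv_lborel by (simp add: AE_completion_iff)
  have vi: "integrable lborel v"
  proof -
    have "integrable lebesgue v"
    proof (rule integrable_cong_AE_imp[OF f0i])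
      show "v \<in> borel_measurable lebesgue" by (rule measurable_completion) simp
    qed (use fv in auto)
    then show ?thesis by (subst (asm) integrable_completion) auto
  qed
  define s where "s = measure lborel ?H"
  have Hpos: "0 < emeasure lborel ?H" using Psi_measure_pos[OF d] .
  have Hup: "2 * emeasure lborel ?H \<le> ennreal (unit_ball_vol CARD('n) * \<delta>^CARD('n))"
    using Psi_measure_upper[OF d] .
  have Hfin: "emeasure lborel ?H < \<infinity>"
  proof -
    have "emeasure lborel ?H \<le> emeasure lborel ?H + emeasure lborel ?H"
      by (rule add_increasing2) auto
    also have "\<dots> = 2 * emeasure lborel ?H" by (simp add: mult_2)
    also note Hup
    finally have "emeasure lborel ?H \<le> ennreal (unit_ball_vol CARD('n) * \<delta>^CARD('n))" .
    then show ?thesis by (rule le_less_trans) simp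
  qed
  have em0: "emeasure lborel ?H = ennreal s"
    using Hfin by (simp add: s_def emeasure_eq_ennreal_measure less_top)
  have s: "s > 0" using Hpos em0 by simp
  have s2: "2 * s \<le> unit_ball_vol CARD('n) * \<delta>^CARD('n)"
  proof -
    have "ennreal (2 * s) \<le> ennreal (unit_ball_vol CARD('n) * \<delta>^CARD('n))"
      using Hup em0 by (simp add: ennreal_mult')
    then show ?thesis using d by (subst (asm) ennreal_le_iff) auto
  qed
  define Q where "Q = unit_ball_vol (real CARD('n) - 1) * \<delta>^(CARD('n)+1) / (CARD('n)+1)"
  have Qe: "(\<integral>\<^sup>+ z. indicator ?H z * ennreal (z \<bullet> e1) \<partial>lborel) = ennreal Q"
    unfolding Q_def by (rule Psi_moment[OF d])
  define \<eta> where "\<eta> = eta_const CARD('n)"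
  have n1: "real CARD('n) - 1 \<ge> 0" by simp
  have V1: "unit_ball_vol (real CARD('n) - 1) > 0" using n1 by simp
  have V0: "unit_ball_vol (real CARD('n)) > 0" by simp
  have eta0: "\<eta> > 0" unfolding \<eta>_def eta_const_def using V1 V0 by simp
  have etaQ: "\<eta> * \<delta> * s \<le> Q"
  proof -
    have "\<eta> * \<delta> * s = (unit_ball_vol (real CARD('n) - 1) * \<delta> / ((real CARD('n) + 1) * unit_ball_vol (real CARD('n)))) * (2 * s)"
      unfolding \<eta>_def eta_const_def by (simp add: field_simps)
    also have "\<dots> \<le> (unit_ball_vol (real CARD('n) - 1) * \<delta> / ((real CARD('n) + 1) * unit_ball_vol (real CARD('n)))) * (unit_ball_vol CARD('n) * \<delta>^CARD('n))"
      by (rule mult_left_mono[OF s2]) (use V1 V0 d in simp)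
    also have "\<dots> = Q" unfolding Q_def using V0 by (subst aux_cancel) (auto simp del: unit_ball_vol_pos)
    finally show ?thesis .
  qed
  have Qs: "Q \<le> \<delta> * s"
  proof -
    have "ennreal Q \<le> (\<integral>\<^sup>+ z. ennreal \<delta> * indicator ?H z \<partial>lborel)"
      unfolding Qe[symmetric]
    proof (intro nn_integral_mono)
      fix z :: "real^'n::{finite,wellorder}"
      show "indicator ?H z * ennreal (z \<bullet> e1) \<le> ennreal \<delta> * indicator ?H z"
        using inner_lt_delta[of z \<delta>] by (cases "z \<in> ?H") (auto simp: ennreal_leI)
    qed
    also have "\<dots> = ennreal (\<delta> * s)" using em0 d by (simp add: nn_integral_cmult ennreal_mult')
    finally show ?thesis using d s by (subst (asm) ennreal_le_iff) auto
  qed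
  define D where "D = diameter \<Omega>"
  define L where "L = 1 + D"
  have D0: "D \<ge> 0" unfolding D_def using bd by (rule diameter_ge_0)
  have L0: "L > 0" using D0 by (simp add: L_def)
  define m where "m = Inf ((\<lambda>y. y \<bullet> e1) ` \<Omega>)"
  have bdd: "bdd_below ((\<lambda>y. y \<bullet> e1) ` \<Omega>)"
  proof -
    obtain B where B: "\<And>y. y \<in> \<Omega> \<Longrightarrow> norm y \<le> B" using bd by (auto simp: bounded_iff)
    show ?thesis
    proof (rule bdd_belowI)
      fix t assume "t \<in> (\<lambda>y. y \<bullet> e1) ` \<Omega>"
      then obtain y where "y \<in> \<Omega>" "t = y \<bullet> e1" by auto
      then show "- B \<le> t" using B[of y] abs_inner_e1_le[of y] by linarith
    qed
  qed
  define c where "c = m - \<delta>"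
  have c1: "c + \<delta> \<le> y \<bullet> e1" if "y \<in> \<Omega>" for y
    unfolding c_def m_def using cInf_lower[OF imageI[OF that] bdd] by simp
  have c2: "y \<bullet> e1 - c \<le> L" if y: "y \<in> \<Omega>" for y
  proof -
    have "y \<bullet> e1 - D \<le> m"
      unfolding m_def
    proof (rule cInf_greatest)
      show "(\<lambda>y. y \<bullet> e1) ` \<Omega> \<noteq> {}" using ne by simp
      fix t assume "t \<in> (\<lambda>y. y \<bullet> e1) ` \<Omega>"
      then obtain z where z: "z \<in> \<Omega>" "t = z \<bullet> e1" by auto
      have "\<bar>(y - z) \<bullet> e1\<bar> \<le> norm (y - z)" by (rule abs_inner_e1_le)
      also have "\<dots> = dist y z" by (simp add: dist_norm)
      also have "\<dots> \<le> D" unfolding D_def by (rule diameter_bounded_bound[OF bd y z(1)])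
      finally show "y \<bullet> e1 - D \<le> t" using z by (simp add: inner_diff_left)
    qed
    then show ?thesis using d1 by (simp add: c_def L_def)
  qed
  define Av where "Av x = (1/s) * (\<integral> y. indicator (Psi \<delta> x) y * v y \<partial>lborel)" for x
  have core_ineq: "(\<integral>\<^sup>+ x. indicator \<Omega> x * ennreal ((v x)\<^sup>2) \<partial>lborel)
     \<le> ennreal (4 * L\<^sup>2 / \<eta>\<^sup>2) * (\<integral>\<^sup>+ x. indicator \<Omega> x * ennreal (((Av x - v x) / \<delta>)\<^sup>2) \<partial>lborel)"
    unfolding Av_def
    by (rule core[OF vb v0' \<Omega>m \<Omega>fin vi d em0 s Qe eta0 etaQ Qs c1 c2 L0])
  have vleb[measurable]: "v \<in> borel_measurable lebesgue" by (rule measurable_completion) simp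
  have wleb[measurable]: "w \<in> borel_measurable lebesgue" using wi by (rule borel_measurable_integrable)
  have ae_u: "AE x in lebesgue. x \<in> \<Omega> \<longrightarrow> u x = v x"
    using fv by eventually_elim (auto simp: f0u indicator_def)
  have Psub: "Psi \<delta> x \<subseteq> \<Omega> \<union> ?G" if "x \<in> \<Omega>" for x
  proof
    fix y assume y: "y \<in> Psi \<delta> x"
    have "y \<in> closure (\<Union>x\<in>\<Omega>. Psi \<delta> x)" using y that closure_subset by blast
    then show "y \<in> \<Omega> \<union> ?G" by (auto simp: Gamma_def)
  qed
  have measP: "measure lborel (Psi \<delta> x) = s" for x :: "real^'n::{finite,wellorder}"
    using Psi_measure_shift[of \<delta> x] em0 s by (simp add: measure_def)
  have intPsi: "(\<integral>y\<in>Psi \<delta> x. (u y - u x) / \<delta> \<partial>lebesgue)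
      = ((\<integral> y. indicator (Psi \<delta> x) y * v y \<partial>lborel) - s * u x) / \<delta>" if x: "x \<in> \<Omega>" for x
  proof -
    let ?P = "Psi \<delta> x"
    have Pm[measurable]: "?P \<in> sets lborel" by simp
    have "(\<integral>y\<in>?P. (u y - u x) / \<delta> \<partial>lebesgue) = (\<integral> y. indicator ?P y * ((w y - u x) / \<delta>) \<partial>lebesgue)"
      unfolding set_lebesgue_integral_def
      using Psub[OF x] by (intro Bochner_Integration.integral_cong refl) (auto simp: w_def indicator_def)
    also have "\<dots> = (\<integral> y. indicator ?P y * ((v y - u x) / \<delta>) \<partial>lebesgue)"
    proof (rule integral_cong_AE)
      show "AE y in lebesgue. indicator ?P y * ((w y - u x) / \<delta>) = indicator ?P y * ((v y - u x) / \<delta>)"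
        using fv uG
      proof eventually_elim
        case (elim y)
        show ?case
        proof (cases "y \<in> ?P")
          case True
          show ?thesis
          proof (cases "y \<in> \<Omega>")
            case True
            then show ?thesis using elim by (simp add: f0_def w_def)
          next
            case False
            then have "y \<in> ?G" using Psub[OF x] \<open>y \<in> ?P\<close> by auto
            then show ?thesis using elim False by (simp add: w_def v_def)
          qed
        qed simp
      qed
    next
      have Pleb: "?P \<in> sets lebesgue" by simp
      show "(\<lambda>y. indicator ?P y * ((w y - u x) / \<delta>)) \<in> borel_measurable lebesgue"
        by (intro borel_measurable_times borel_measurable_divide borel_measurable_diff borel_measurable_const
            borel_measurable_indicator Pleb wleb)
      show "(\<lambda>y. indicator ?P y * ((v y - u x) / \<delta>)) \<in> borel_measurable lebesgue"
        by (intro borel_measurable_times borel_measurable_divide borel_measurable_diff borel_measurable_const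
            borel_measurable_indicator Pleb vleb)
    qed
    also have "\<dots> = (\<integral> y. indicator ?P y * ((v y - u x) / \<delta>) \<partial>lborel)"
      by (rule integral_completion) measurable
    also have "\<dots> = (\<integral> y. indicator ?P y * v y / \<delta> - (u x / \<delta>) * indicator ?P y \<partial>lborel)"
      by (intro Bochner_Integration.integral_cong refl) (simp add: diff_divide_distrib algebra_simps)
    also have "\<dots> = (\<integral> y. indicator ?P y * v y \<partial>lborel) / \<delta> - (u x / \<delta>) * s"
    proof -
      have i1: "integrable lborel (\<lambda>y. indicator ?P y * v y)"
        using integrable_real_mult_indicator[OF Pm vi] by (simp add: mult_ac)
      have i0: "integrable lborel (\<lambda>y. indicator ?P y :: real)"
        using Psi_measure_shift[of \<delta> x] em0 by (intro integrable_real_indicator) auto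
      show ?thesis using i0 i1 measP[of x] by simp
    qed
    also have "\<dots> = ((\<integral> y. indicator ?P y * v y \<partial>lborel) - s * u x) / \<delta>"
      by (simp add: diff_divide_distrib mult.commute)
    finally show ?thesis .
  qed
  have lhs: "(\<integral>\<^sup>+ x\<in>\<Omega>. ennreal ((u x)\<^sup>2) \<partial>lebesgue) = (\<integral>\<^sup>+ x. indicator \<Omega> x * ennreal ((v x)\<^sup>2) \<partial>lborel)"
  proof -
    have "(\<integral>\<^sup>+ x\<in>\<Omega>. ennreal ((u x)\<^sup>2) \<partial>lebesgue) = (\<integral>\<^sup>+ x. indicator \<Omega> x * ennreal ((v x)\<^sup>2) \<partial>lebesgue)"
      by (intro nn_integral_cong_AE) (use ae_u in \<open>eventually_elim, auto simp: indicator_def\<close>)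
    also have "\<dots> = (\<integral>\<^sup>+ x. indicator \<Omega> x * ennreal ((v x)\<^sup>2) \<partial>lborel)"
      by (rule nn_integral_completion)
    finally show ?thesis .
  qed
  have rhs: "(\<integral>\<^sup>+ x\<in>\<Omega>. ennreal ((\<bar>(1 / measure lebesgue (Psi \<delta> x)) *
            (\<integral>y\<in>Psi \<delta> x. (u y - u x) / \<delta> \<partial>lebesgue)\<bar>)\<^sup>2) \<partial>lebesgue)
      = (\<integral>\<^sup>+ x. indicator \<Omega> x * ennreal (((Av x - v x) / \<delta>)\<^sup>2) \<partial>lborel)"
  proof -
    have "(\<integral>\<^sup>+ x\<in>\<Omega>. ennreal ((\<bar>(1 / measure lebesgue (Psi \<delta> x)) *
            (\<integral>y\<in>Psi \<delta> x. (u y - u x) / \<delta> \<partial>lebesgue)\<bar>)\<^sup>2) \<partial>lebesgue)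
       = (\<integral>\<^sup>+ x. indicator \<Omega> x * ennreal (((Av x - v x) / \<delta>)\<^sup>2) \<partial>lebesgue)"
    proof (intro nn_integral_cong_AE)
      show "AE x in lebesgue. ennreal ((\<bar>(1 / measure lebesgue (Psi \<delta> x)) *
            (\<integral>y\<in>Psi \<delta> x. (u y - u x) / \<delta> \<partial>lebesgue)\<bar>)\<^sup>2) * indicator \<Omega> x
          = indicator \<Omega> x * ennreal (((Av x - v x) / \<delta>)\<^sup>2)"
        using ae_u
      proof eventually_elim
        case (elim x)
        show ?case
        proof (cases "x \<in> \<Omega>")
          case True
          have ml: "measure lebesgue (Psi \<delta> x) = s" using measP[of x] by simp
          have "(1 / measure lebesgue (Psi \<delta> x)) * (\<integral>y\<in>Psi \<delta> x. (u y - u x) / \<delta> \<partial>lebesgue)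
              = (Av x - v x) / \<delta>"
            unfolding ml intPsi[OF True] Av_def using elim True s d by (simp add: field_simps)
          then show ?thesis using True by (simp only: power2_abs) simp
        qed simp
      qed
    qed
    also have "\<dots> = (\<integral>\<^sup>+ x. indicator \<Omega> x * ennreal (((Av x - v x) / \<delta>)\<^sup>2) \<partial>lborel)"
      by (rule nn_integral_completion)
    finally show ?thesis .
  qed
  have L1: "L \<ge> 1" using D0 by (simp add: L_def)
  have const: "4 * L\<^sup>2 / \<eta>\<^sup>2 \<le> 4 * (1 + diameter \<Omega>) ^ 3 / (eta_const CARD('n))\<^sup>2"
  proof -
    have "L\<^sup>2 \<le> L ^ 3" using L1 by (simp add: power2_eq_square power3_eq_cube)
    then show ?thesis using eta0 by (simp add: L_def D_def \<eta>_def divide_right_mono)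
  qed
  show ?thesis
    unfolding lhs rhs
    using core_ineq
    by (rule order_trans) (rule mult_right_mono[OF ennreal_leI[OF const]], simp)
qed


end
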